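(* Let $n$ be a positive integer and $H=([n],E)$ an $r$-uniform hypergraph with $r\ge2$. Then for all $0\le i\le n$, \[\sum_{c=0}^i(-1)^c\binom{i}{c}\Big((i-c+2)^n-\#E\cdot(i-c+2)^{n-r+1}\Big)\le f_i(\chi_H(k+1))\le\sum_{c=0}^i(-1)^c\binom{i}{c}(i-c+2)^n.\] (The upper bound holds for arbitrary hypergraphs without loops on $[n]$.)
   Context: A hypergraph $H=([n],E)$ has edges that are nonempty subsets of $[n]$, no edge of size 1, no edge properly contained in another; $r$-uniform means all edges have cardinality $r$. A proper $k$-coloring is a map $[n]\to[k]$ with no monochromatic edge; $\chi_H(k)$ is the number of proper $k$-colorings. For a polynomial $p(k)$ of degree at most $n$, its $f$-vector is defined by $p(k)=\sum_{i=0}^n f_i(p)\binom{k-1}{i}$, $f_{-1}=1$; $f_i(\chi_H(k+1))$ refers to the polynomial $k\mapsto\chi_H(k+1)$. *)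

theory Defs
  imports "HOL-Library.FuncSet" "HOL-Computational_Algebra.Polynomial"
begin

definition hypergraph :: "nat \<Rightarrow> nat set set \<Rightarrow> bool" where
  "hypergraph n E \<longleftrightarrow>
     (\<forall>e\<in>E. e \<subseteq> {1..n} \<and> e \<noteq> {} \<and> card e \<noteq> 1) \<and>
     (\<forall>e\<in>E. \<forall>e'\<in>E. e \<subseteq> e' \<longrightarrow> e = e')"

definition uniform :: "nat \<Rightarrow> nat set set \<Rightarrow> bool" where
  "uniform r E \<longleftrightarrow> (\<forall>e\<in>E. card e = r)"

definition chi :: "nat \<Rightarrow> nat set set \<Rightarrow> nat \<Rightarrow> nat" where
  "chi n E k = card {c \<in> {1..n} \<rightarrow>\<^sub>E {1..k}.
                       \<forall>e\<in>E. \<not> (\<exists>a. \<forall>v\<in>e. c v = a)}"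

definition chrom_poly :: "nat \<Rightarrow> nat set set \<Rightarrow> real poly" where
  "chrom_poly n E = (THE p. degree p \<le> n \<and> (\<forall>k::nat. poly p (real k) = real (chi n E k)))"

definition fvec :: "nat \<Rightarrow> real poly \<Rightarrow> nat \<Rightarrow> real" where
  "fvec n p = (THE f. (\<forall>i>n. f i = 0) \<and>
                      (\<forall>x. poly p x = (\<Sum>i\<le>n. f i * ((x - 1) gchoose i))))"

end

theory Submission imports Defs begin

definition cntQ :: "((nat \<Rightarrow> nat) \<Rightarrow> bool) \<Rightarrow> nat set \<Rightarrow> nat set \<Rightarrow> nat set \<Rightarrow> nat" where
  "cntQ Q S Y Z = card {c \<in> S \<rightarrow>\<^sub>E Y. Q c \<and> Z \<subseteq> c ` S}"

definition invQ :: "((nat \<Rightarrow> nat) \<Rightarrow> bool) \<Rightarrow> nat set \<Rightarrow> bool" where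
  "invQ Q S = (\<forall>c f. inj_on f (c ` S) \<longrightarrow> Q (restrict (f \<circ> c) S) = Q c)"

lemma relabel:
  assumes fS: "finite S" and iq: "invQ Q S" and bij: "bij_betw \<sigma> Y Y'" and ZY: "Z \<subseteq> Y"
  shows "cntQ Q S Y Z = cntQ Q S Y' (\<sigma> ` Z)"
proof -
  define \<tau> where "\<tau> = inv_into Y \<sigma>"
  have bij2: "bij_betw \<tau> Y' Y" unfolding \<tau>_def using bij by (rule bij_betw_inv_into)
  have ti: "\<And>y. y \<in> Y \<Longrightarrow> \<tau> (\<sigma> y) = y" unfolding \<tau>_def using bij
    by (simp add: bij_betw_def inv_into_f_f)
  have st: "\<And>y. y \<in> Y' \<Longrightarrow> \<sigma> (\<tau> y) = y" unfolding \<tau>_def using bij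
    by (simp add: bij_betw_def f_inv_into_f)
  have tZ: "\<tau> ` (\<sigma> ` Z) = Z" using ti ZY by force
  let ?A = "{c \<in> S \<rightarrow>\<^sub>E Y. Q c \<and> Z \<subseteq> c ` S}"
  let ?B = "{c \<in> S \<rightarrow>\<^sub>E Y'. Q c \<and> \<sigma> ` Z \<subseteq> c ` S}"
  have "bij_betw (\<lambda>c. restrict (\<sigma> \<circ> c) S) ?A ?B"
  proof (rule bij_betw_byWitness[where f'="\<lambda>c. restrict (\<tau> \<circ> c) S"])
    show "\<forall>a\<in>?A. restrict (\<tau> \<circ> restrict (\<sigma> \<circ> a) S) S = a"
      using ti by (auto simp: fun_eq_iff PiE_def extensional_def Pi_def)
    show "\<forall>a\<in>?B. restrict (\<sigma> \<circ> restrict (\<tau> \<circ> a) S) S = a"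
      using st by (auto simp: fun_eq_iff PiE_def extensional_def Pi_def)
    show "(\<lambda>c. restrict (\<sigma> \<circ> c) S) ` ?A \<subseteq> ?B"
    proof (rule image_subsetI)
      fix c assume "c \<in> ?A"
      then have c: "c \<in> S \<rightarrow>\<^sub>E Y" "Q c" "Z \<subseteq> c ` S" by auto
      have "\<forall>v\<in>S. \<sigma> (c v) \<in> Y'" using c bij by (auto simp: bij_betw_def PiE_iff)
      then have 1: "restrict (\<sigma> \<circ> c) S \<in> S \<rightarrow>\<^sub>E Y'" by (simp add: restrict_PiE_iff)
      have "inj_on \<sigma> (c ` S)" using c bij by (meson PiE_iff bij_betw_def image_subsetI inj_on_subset)
      then have 2: "Q (restrict (\<sigma> \<circ> c) S)" using iq c unfolding invQ_def by blast
      have 3: "\<sigma> ` Z \<subseteq> restrict (\<sigma> \<circ> c) S ` S"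
      proof
        fix y assume "y \<in> \<sigma> ` Z" then obtain z where z: "z \<in> Z" "y = \<sigma> z" by auto
        then obtain v where "v \<in> S" "z = c v" using c by blast
        then show "y \<in> restrict (\<sigma> \<circ> c) S ` S" using z by auto
      qed
      show "restrict (\<sigma> \<circ> c) S \<in> ?B" using 1 2 3 by blast
    qed
    show "(\<lambda>c. restrict (\<tau> \<circ> c) S) ` ?B \<subseteq> ?A"
    proof (rule image_subsetI)
      fix c assume "c \<in> ?B"
      then have c: "c \<in> S \<rightarrow>\<^sub>E Y'" "Q c" "\<sigma> ` Z \<subseteq> c ` S" by auto
      have "\<forall>v\<in>S. \<tau> (c v) \<in> Y" using c bij2 by (auto simp: bij_betw_def PiE_iff)
      then have 1: "restrict (\<tau> \<circ> c) S \<in> S \<rightarrow>\<^sub>E Y" by (simp add: restrict_PiE_iff)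
      have "inj_on \<tau> (c ` S)" using c bij2 by (meson PiE_iff bij_betw_def image_subsetI inj_on_subset)
      then have 2: "Q (restrict (\<tau> \<circ> c) S)" using iq c unfolding invQ_def by blast
      have 3: "Z \<subseteq> restrict (\<tau> \<circ> c) S ` S"
      proof
        fix z assume z: "z \<in> Z" then obtain v where "v \<in> S" "\<sigma> z = c v" using c by blast
        then have "\<tau> (c v) = z" using ti z ZY by (metis subsetD)
        then show "z \<in> restrict (\<tau> \<circ> c) S ` S" using \<open>v \<in> S\<close> by force
      qed
      show "restrict (\<tau> \<circ> c) S \<in> ?A" using 1 2 3 by blast
    qed
  qed
  then show ?thesis unfolding cntQ_def by (rule bij_betw_same_card)
qed


lemma decomp:
  assumes fS: "finite S" and fD: "finite D" and fM: "finite M" and dis: "D \<inter> M = {}"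
  shows "card {c \<in> S \<rightarrow>\<^sub>E (D \<union> M). Q c} = (\<Sum>T\<in>Pow M. cntQ Q S (D \<union> T) T)"
proof -
  define A where "A T = {c \<in> S \<rightarrow>\<^sub>E (D \<union> T). Q c \<and> T \<subseteq> c ` S}" for T
  have eq: "{c \<in> S \<rightarrow>\<^sub>E (D \<union> M). Q c} = (\<Union>T\<in>Pow M. A T)"
  proof
    show "{c \<in> S \<rightarrow>\<^sub>E (D \<union> M). Q c} \<subseteq> (\<Union>T\<in>Pow M. A T)"
    proof
      fix c assume c: "c \<in> {c \<in> S \<rightarrow>\<^sub>E (D \<union> M). Q c}"
      have "c \<in> S \<rightarrow>\<^sub>E (D \<union> (c ` S \<inter> M))" using c by (auto simp: PiE_iff)
      then have "c \<in> A (c ` S \<inter> M)" using c unfolding A_def by auto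
      then show "c \<in> (\<Union>T\<in>Pow M. A T)" by blast
    qed
    show "(\<Union>T\<in>Pow M. A T) \<subseteq> {c \<in> S \<rightarrow>\<^sub>E (D \<union> M). Q c}"
      unfolding A_def by (auto simp: PiE_iff)
  qed
  have key: "\<And>T c. T \<subseteq> M \<Longrightarrow> c \<in> A T \<Longrightarrow> T = c ` S \<inter> M"
    using dis unfolding A_def by (auto simp: PiE_iff)
  have "card (\<Union>T\<in>Pow M. A T) = (\<Sum>T\<in>Pow M. card (A T))"
  proof (rule card_UN_disjoint)
    show "finite (Pow M)" using fM by simp
    show "\<forall>T\<in>Pow M. finite (A T)"
    proof
      fix T assume "T \<in> Pow M"
      then have "finite (D \<union> T)" using fD fM by (meson PowD finite_Un finite_subset)
      then show "finite (A T)"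
        using fS unfolding A_def by (intro finite_subset[OF _ finite_PiE[of S "\<lambda>_. D \<union> T"]]) auto
    qed
    show "\<forall>T1\<in>Pow M. \<forall>T2\<in>Pow M. T1 \<noteq> T2 \<longrightarrow> A T1 \<inter> A T2 = {}"
      using key by (metis disjoint_iff PowD)
  qed
  then show ?thesis unfolding eq cntQ_def A_def[symmetric] by simp
qed

lemma canon:
  assumes fS: "finite S" and iq: "invQ Q S" and fT: "finite T" and dis: "T \<inter> {1..d} = {}"
  shows "cntQ Q S ({1..d} \<union> T) T = cntQ Q S {1..d + card T} {d+1..d + card T}"
proof -
  obtain f where f: "bij_betw f T {d+1..d+card T}"
    using finite_same_card_bij[OF fT, of "{d+1..d+card T}"] fT by auto
  define \<sigma> where "\<sigma> x = (if x \<in> T then f x else x)" for x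
  have b1: "bij_betw \<sigma> T {d+1..d+card T}" using f by (rule bij_betw_cong[THEN iffD1, rotated]) (simp add: \<sigma>_def)
  have "\<forall>x\<in>{1..d}. \<sigma> x = id x" using dis by (auto simp: \<sigma>_def)
  then have b2: "bij_betw \<sigma> {1..d} {1..d}" using bij_betw_cong[of "{1..d}" \<sigma> id "{1..d}"] bij_betw_id by metis
  have "bij_betw \<sigma> ({1..d} \<union> T) ({1..d} \<union> {d+1..d+card T})"
    by (rule bij_betw_combine[OF b2 b1]) auto
  moreover have "{1..d} \<union> {d+1..d+card T} = {1..d+card T}" by auto
  moreover have "\<sigma> ` T = {d+1..d+card T}" using b1 by (simp add: bij_betw_def)
  ultimately show ?thesis using relabel[OF fS iq, of \<sigma> "{1..d} \<union> T" "{1..d+card T}" T] by auto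
qed

lemma sum_pow_card:
  assumes fM: "finite M"
  shows "(\<Sum>T\<in>Pow M. g (card T)) = (\<Sum>k\<le>card M. (card M choose k) * g k)"
proof -
  have "(\<Sum>T\<in>Pow M. g (card T)) = (\<Sum>k\<le>card M. \<Sum>T\<in>{T. T \<in> Pow M \<and> card T = k}. g (card T))"
    using fM by (intro sum.group[symmetric]) (auto intro: card_mono)
  also have "\<dots> = (\<Sum>k\<le>card M. (card M choose k) * g k)"
  proof (rule sum.cong[OF refl])
    fix k
    have "(\<Sum>T\<in>{T. T \<in> Pow M \<and> card T = k}. g (card T)) = (\<Sum>T\<in>{T. T \<subseteq> M \<and> card T = k}. g k)"
      by (rule sum.cong) auto
    also have "\<dots> = (card M choose k) * g k" using n_subsets[OF fM, of k] by simp
    finally show "(\<Sum>T\<in>{T. T \<in> Pow M \<and> card T = k}. g (card T)) = (card M choose k) * g k" .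
  qed
  finally show ?thesis .
qed

lemma decomp_canon:
  assumes fS: "finite S" and iq: "invQ Q S"
  shows "card {c \<in> S \<rightarrow>\<^sub>E {1..d+m}. Q c} = (\<Sum>k\<le>m. (m choose k) * cntQ Q S {1..d+k} {d+1..d+k})"
proof -
  have "{1..d+m} = {1..d} \<union> {d+1..d+m}" by auto
  then have "card {c \<in> S \<rightarrow>\<^sub>E {1..d+m}. Q c} = (\<Sum>T\<in>Pow {d+1..d+m}. cntQ Q S ({1..d} \<union> T) T)"
    using decomp[OF fS, of "{1..d}" "{d+1..d+m}" Q] by auto
  also have "\<dots> = (\<Sum>T\<in>Pow {d+1..d+m}. cntQ Q S {1..d + card T} {d+1..d + card T})"
    by (rule sum.cong[OF refl], rule canon[OF fS iq]) (meson finite_atLeastAtMost PowD finite_subset, auto)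
  also have "\<dots> = (\<Sum>k\<le>m. (m choose k) * cntQ Q S {1..d+k} {d+1..d+k})"
    using sum_pow_card[of "{d+1..d+m}" "\<lambda>k. cntQ Q S {1..d + k} {d+1..d + k}"] by simp
  finally show ?thesis .
qed

lemma cnt_vanish:
  assumes fS: "finite S" and "card S < card Z" and "finite Z"
  shows "cntQ Q S Y Z = 0"
proof -
  have "{c \<in> S \<rightarrow>\<^sub>E Y. Q c \<and> Z \<subseteq> c ` S} = {}"
  proof (rule ccontr)
    assume "{c \<in> S \<rightarrow>\<^sub>E Y. Q c \<and> Z \<subseteq> c ` S} \<noteq> {}"
    then obtain c where "Z \<subseteq> c ` S" by auto
    then have "card Z \<le> card (c ` S)" using fS by (intro card_mono) auto
    also have "\<dots> \<le> card S" using fS by (rule card_image_le)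
    finally show False using assms by simp
  qed
  then show ?thesis unfolding cntQ_def by (metis card.empty)
qed

lemma alt0: "(\<Sum>t\<le>m. (-1)^(m-t) * real (m choose t)) = (if m = 0 then 1 else 0)"
proof -
  have "(1 + (-1::real))^m = (\<Sum>t\<le>m. real (m choose t) * 1^t * (-1)^(m-t))"
    by (rule binomial_ring)
  then show ?thesis by (simp add: mult.commute power_0_left)
qed

lemma kron:
  assumes ki: "k \<le> i"
  shows "(\<Sum>j\<le>i. (-1)^(i-j) * real (i choose j) * real (j choose k)) = (if k = i then 1 else 0)"
proof -
  have "(\<Sum>j\<le>i. (-1)^(i-j) * real (i choose j) * real (j choose k))
      = (\<Sum>j\<in>{k..i}. (-1)^(i-j) * real (i choose j) * real (j choose k))"
    by (rule sum.mono_neutral_right) (auto simp: binomial_eq_0)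
  also have "\<dots> = (\<Sum>j\<in>{k..i}. real (i choose k) * ((-1)^(i-j) * real ((i-k) choose (j-k))))"
  proof (rule sum.cong[OF refl])
    fix j assume "j \<in> {k..i}"
    then have "(i choose j) * (j choose k) = (i choose k) * ((i - k) choose (j - k))"
      by (intro choose_mult) auto
    then have "real (i choose j) * real (j choose k) = real (i choose k) * real ((i - k) choose (j - k))"
      by (metis of_nat_mult)
    then show "(-1)^(i-j) * real (i choose j) * real (j choose k) = real (i choose k) * ((-1)^(i-j) * real ((i-k) choose (j-k)))"
      by (simp add: algebra_simps)
  qed
  also have "\<dots> = real (i choose k) * (\<Sum>j\<in>{k..i}. (-1)^(i-j) * real ((i-k) choose (j-k)))"
    by (simp add: sum_distrib_left)
  also have "(\<Sum>j\<in>{k..i}. (-1)^(i-j) * real ((i-k) choose (j-k))) = (\<Sum>t\<in>{0..i-k}. (-1)^((i-k)-t) * real ((i-k) choose t))"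
  proof -
    have "{k..i} = {0+k..(i-k)+k}" using ki by simp
    then have "(\<Sum>j\<in>{k..i}. (-1)^(i-j) * real ((i-k) choose (j-k))) = (\<Sum>t\<in>{0..i-k}. (-1)^(i-(t+k)) * real ((i-k) choose (t+k-k)))"
      by (simp only: sum.shift_bounds_cl_nat_ivl)
    also have "\<dots> = (\<Sum>t\<in>{0..i-k}. (-1)^((i-k)-t) * real ((i-k) choose t))"
      by (rule sum.cong) (auto simp: add.commute)
    finally show ?thesis .
  qed
  also have "\<dots> = (if i - k = 0 then 1 else 0)" using alt0[of "i-k"] by (simp add: atLeast0AtMost)
  finally show ?thesis using ki by auto
qed

lemma binv:
  fixes N g :: "nat \<Rightarrow> real"
  assumes N: "\<And>m. N m = (\<Sum>k\<le>m. real (m choose k) * g k)"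
  shows "g i = (\<Sum>c=0..i. (-1)^c * real (i choose c) * N (i - c))"
proof -
  have "(\<Sum>c=0..i. (-1)^c * real (i choose c) * N (i - c)) = (\<Sum>j=0..i. (-1)^(i-j) * real (i choose (i-j)) * N j)"
    by (subst sum.atLeastAtMost_rev) simp
  also have "\<dots> = (\<Sum>j\<le>i. (-1)^(i-j) * real (i choose j) * N j)"
    by (rule sum.cong) (auto simp: atLeast0AtMost binomial_symmetric[symmetric])
  also have "\<dots> = (\<Sum>j\<le>i. \<Sum>k\<le>i. (-1)^(i-j) * real (i choose j) * (real (j choose k) * g k))"
  proof (rule sum.cong[OF refl])
    fix j assume j: "j \<in> {..i}"
    have "N j = (\<Sum>k\<le>i. real (j choose k) * g k)"
      unfolding N using j by (intro sum.mono_neutral_left) (auto simp: binomial_eq_0)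
    then show "(-1)^(i-j) * real (i choose j) * N j = (\<Sum>k\<le>i. (-1)^(i-j) * real (i choose j) * (real (j choose k) * g k))"
      by (simp add: sum_distrib_left)
  qed
  also have "\<dots> = (\<Sum>k\<le>i. g k * (\<Sum>j\<le>i. (-1)^(i-j) * real (i choose j) * real (j choose k)))"
    by (subst sum.swap) (simp add: sum_distrib_left algebra_simps)
  also have "\<dots> = (\<Sum>k\<le>i. if k = i then g k else 0)"
    by (rule sum.cong[OF refl]) (simp add: kron)
  also have "\<dots> = g i" by simp
  finally show ?thesis by simp
qed

definition bp :: "real \<Rightarrow> nat \<Rightarrow> real poly" where
  "bp a k = smult (1 / fact k) (\<Prod>i=0..<k. [:a - of_nat i, 1:])"

lemma poly_bp: "poly (bp a k) x = (x + a) gchoose k"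
  by (simp add: bp_def poly_prod gbinomial_prod_rev algebra_simps)

lemma degree_bp: "degree (bp a k) \<le> k"
proof -
  have "degree (\<Prod>i=0..<k. [:a - of_nat i, 1:]) \<le> (\<Sum>i=0..<k. (degree \<circ> (\<lambda>i. [:a - of_nat i, 1:])) i)"
    by (rule degree_prod_sum_le) simp
  also have "\<dots> = k" by simp
  finally show ?thesis unfolding bp_def by (meson degree_smult_le order_trans)
qed

lemma poly_eq_on_nat:
  fixes p q :: "real poly"
  assumes "\<And>m::nat. poly p (real m + a) = poly q (real m + a)"
  shows "p = q"
proof (rule ccontr)
  assume "p \<noteq> q"
  then have "p - q \<noteq> 0" by simp
  then have fin: "finite {x. poly (p - q) x = 0}" by (rule poly_roots_finite)
  have "(\<lambda>m::nat. real m + a) ` UNIV \<subseteq> {x. poly (p - q) x = 0}" using assms by auto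
  moreover have "infinite ((\<lambda>m::nat. real m + a) ` UNIV)"
    by (rule range_inj_infinite) (auto simp: inj_def)
  ultimately show False using fin finite_subset by blast
qed

definition mono_e :: "nat set \<Rightarrow> (nat \<Rightarrow> nat) \<Rightarrow> bool" where
  "mono_e e c = (\<exists>a. \<forall>v\<in>e. c v = a)"

definition proper :: "nat set set \<Rightarrow> (nat \<Rightarrow> nat) \<Rightarrow> bool" where
  "proper E c = (\<forall>e\<in>E. \<not> mono_e e c)"

lemma mono_e_inv:
  assumes "e \<subseteq> S" "inj_on f (c ` S)"
  shows "mono_e e (restrict (f \<circ> c) S) = mono_e e c"
proof
  assume "mono_e e c" then show "mono_e e (restrict (f \<circ> c) S)"
    using assms(1) unfolding mono_e_def by (metis comp_apply restrict_apply' subsetD)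
next
  assume h: "mono_e e (restrict (f \<circ> c) S)"
  show "mono_e e c"
  proof (cases "e = {}")
    case True then show ?thesis by (simp add: mono_e_def)
  next
    case False
    then obtain v0 where v0: "v0 \<in> e" by auto
    from h obtain a where a: "\<forall>v\<in>e. restrict (f \<circ> c) S v = a" unfolding mono_e_def by auto
    have "\<forall>v\<in>e. c v = c v0"
    proof
      fix v assume v: "v \<in> e"
      have "f (c v) = f (c v0)" using a v v0 assms(1) by (metis comp_apply restrict_apply' subsetD)
      then show "c v = c v0" using assms v v0 by (meson image_eqI inj_onD subsetD)
    qed
    then show ?thesis unfolding mono_e_def by blast
  qed
qed

lemma inv_mono: "e \<subseteq> S \<Longrightarrow> invQ (mono_e e) S"
  unfolding invQ_def using mono_e_inv by blast

lemma inv_proper: "\<forall>e\<in>E. e \<subseteq> S \<Longrightarrow> invQ (proper E) S"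
  unfolding invQ_def proper_def using mono_e_inv by blast

lemma inv_true: "invQ (\<lambda>_. True) S"
  unfolding invQ_def by simp

lemma count_true: "card {c \<in> {1..n::nat} \<rightarrow>\<^sub>E {1..k::nat}. True} = k ^ n"
  by (simp add: card_PiE)

lemma count_mono:
  assumes eS: "e \<subseteq> {1..n}" and ce: "card e = r" and r: "r \<ge> 1"
  shows "card {c \<in> {1..n::nat} \<rightarrow>\<^sub>E {1..k::nat}. mono_e e c} = k ^ (n - r + 1)"
proof -
  let ?S = "{1..n}" and ?Y = "{1..k}"
  have ne: "e \<noteq> {}" using ce r by auto
  define F where "F a = (\<Pi>\<^sub>E v\<in>?S. if v \<in> e then {a} else ?Y)" for a
  have eq: "{c \<in> ?S \<rightarrow>\<^sub>E ?Y. mono_e e c} = (\<Union>a\<in>?Y. F a)"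
  proof
    show "{c \<in> ?S \<rightarrow>\<^sub>E ?Y. mono_e e c} \<subseteq> (\<Union>a\<in>?Y. F a)"
    proof
      fix c assume c: "c \<in> {c \<in> ?S \<rightarrow>\<^sub>E ?Y. mono_e e c}"
      obtain v0 where v0: "v0 \<in> e" using ne by auto
      from c obtain a where a: "\<forall>v\<in>e. c v = a" unfolding mono_e_def by auto
      have "a \<in> ?Y" using c a v0 eS by (metis (no_types, lifting) PiE_iff mem_Collect_eq subsetD)
      moreover have "c \<in> F a" using c a unfolding F_def by (auto simp: PiE_iff)
      ultimately show "c \<in> (\<Union>a\<in>?Y. F a)" by blast
    qed
    show "(\<Union>a\<in>?Y. F a) \<subseteq> {c \<in> ?S \<rightarrow>\<^sub>E ?Y. mono_e e c}"
    proof
      fix c assume "c \<in> (\<Union>a\<in>?Y. F a)"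
      then obtain a where a: "a \<in> ?Y" "c \<in> F a" by auto
      then have "c \<in> ?S \<rightarrow>\<^sub>E ?Y" unfolding F_def by (auto simp: PiE_iff split: if_splits)
      moreover have "\<forall>v\<in>e. c v = a"
      proof
        fix v assume v: "v \<in> e"
        then have "v \<in> ?S" using eS by auto
        then have "c v \<in> (if v \<in> e then {a} else ?Y)" using a(2) unfolding F_def by (auto simp: PiE_iff)
        then show "c v = a" using v by simp
      qed
      then have "mono_e e c" unfolding mono_e_def by blast
      ultimately show "c \<in> {c \<in> ?S \<rightarrow>\<^sub>E ?Y. mono_e e c}" by blast
    qed
  qed
  have cF: "card (F a) = k ^ (n - r)" for a
  proof -
    have "card (F a) = (\<Prod>v\<in>?S. card (if v \<in> e then {a} else ?Y))"
      unfolding F_def by (rule card_PiE) simp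
    also have "\<dots> = (\<Prod>v\<in>?S. if v \<in> e then 1 else k)"
      by (rule prod.cong) auto
    also have "\<dots> = (\<Prod>v\<in>?S \<inter> {x. x \<in> e}. 1) * (\<Prod>v\<in>?S \<inter> - {x. x \<in> e}. k)"
      by (rule prod.If_cases) simp
    also have "\<dots> = k ^ card (?S \<inter> - e)" by simp
    also have "?S \<inter> - e = ?S - e" by auto
    also have "card (?S - e) = n - r" using eS ce by (simp add: card_Diff_subset finite_subset)
    finally show ?thesis .
  qed
  have "card (\<Union>a\<in>?Y. F a) = (\<Sum>a\<in>?Y. card (F a))"
  proof (rule card_UN_disjoint)
    show "\<forall>a\<in>?Y. finite (F a)" unfolding F_def by (auto intro!: finite_PiE)
    show "\<forall>a\<in>?Y. \<forall>b\<in>?Y. a \<noteq> b \<longrightarrow> F a \<inter> F b = {}"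
    proof (intro ballI impI)
      fix a b :: nat assume "a \<in> ?Y" "b \<in> ?Y" "a \<noteq> b"
      obtain v0 where v0: "v0 \<in> e" using ne by auto
      then have "v0 \<in> ?S" using eS by auto
      show "F a \<inter> F b = {}"
      proof (rule ccontr)
        assume "F a \<inter> F b \<noteq> {}"
        then obtain c where "c \<in> F a" "c \<in> F b" by auto
        then have "c v0 \<in> (if v0 \<in> e then {a} else ?Y)" "c v0 \<in> (if v0 \<in> e then {b} else ?Y)"
          using \<open>v0 \<in> ?S\<close> unfolding F_def by (auto simp: PiE_iff)
        then show False using v0 \<open>a \<noteq> b\<close> by simp
      qed
    qed
  qed simp
  also have "\<dots> = k * k ^ (n - r)" using cF by simp
  also have "\<dots> = k ^ (n - r + 1)" by simp
  finally show ?thesis using eq by simp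
qed

lemma tri_unique:
  fixes f g :: "nat \<Rightarrow> real"
  assumes f0: "\<forall>i>n. f i = 0" and g0: "\<forall>i>n. g i = 0"
    and eq: "\<forall>m::nat. (\<Sum>i\<le>n. f i * real (m choose i)) = (\<Sum>i\<le>n. g i * real (m choose i))"
  shows "f = g"
proof -
  define h where "h i = f i - g i" for i
  have h0: "\<forall>i>n. h i = 0" using f0 g0 by (simp add: h_def)
  have hs: "(\<Sum>i\<le>n. h i * real (m choose i)) = 0" for m
    using eq[rule_format, of m] by (simp add: h_def algebra_simps sum_subtractf)
  have "h i = 0" for i
  proof (induction i rule: less_induct)
    case (less i)
    show ?case
    proof (cases "i \<le> n")
      case False then show ?thesis using h0 by simp
    next
      case True
      have "(\<Sum>j\<le>n. h j * real (i choose j)) = h i * real (i choose i) + (\<Sum>j\<in>{..n} - {i}. h j * real (i choose j))"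
        using True by (subst sum.remove[of _ i]) auto
      also have "(\<Sum>j\<in>{..n} - {i}. h j * real (i choose j)) = 0"
      proof (rule sum.neutral, rule ballI)
        fix j assume j: "j \<in> {..n} - {i}"
        show "h j * real (i choose j) = 0"
        proof (cases "j < i")
          case True then show ?thesis using less by simp
        next
          case False then have "i < j" using j by auto
          then show ?thesis by (simp add: binomial_eq_0)
        qed
      qed
      finally show ?thesis using hs[of i] by simp
    qed
  qed
  then show ?thesis by (auto simp: fun_eq_iff h_def)
qed

lemma sum_ext_nat:
  fixes F :: "nat \<Rightarrow> real"
  assumes "\<forall>j>n. F j = 0" and "\<forall>j>m. F j = 0"
  shows "(\<Sum>j\<le>n. F j) = (\<Sum>j\<le>m. F j)"
proof -
  have "(\<Sum>j\<le>n. F j) = (\<Sum>j\<le>n+m. F j)" using assms(1) by (intro sum.mono_neutral_left) auto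
  also have "\<dots> = (\<Sum>j\<le>m. F j)" using assms(2) by (intro sum.mono_neutral_right) auto
  finally show ?thesis .
qed

lemma chi_eq: "chi n E k = card {c \<in> {1..n} \<rightarrow>\<^sub>E {1..k}. proper E c}"
  unfolding chi_def proper_def mono_e_def by simp

lemma fvec_eq:
  assumes eS: "\<forall>e\<in>E. e \<subseteq> {1..n}"
  shows "fvec n (pcompose (chrom_poly n E) [:1,1:]) = (\<lambda>i. real (cntQ (proper E) {1..n} {1..2+i} {2+1..2+i}))"
proof -
  let ?S = "{1..n::nat}"
  have fS: "finite ?S" by simp
  have iq: "invQ (proper E) ?S" using inv_proper eS by blast
  define D where "D j = cntQ (proper E) ?S {1..0+j} {0+1..0+j}" for j
  define G where "G i = cntQ (proper E) ?S {1..2+i} {2+1..2+i}" for i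
  have D0: "\<forall>j>n. real (D j) = 0" unfolding D_def by (auto intro!: cnt_vanish)
  have G0: "\<forall>j>n. real (G j) = 0" unfolding G_def by (auto intro!: cnt_vanish)
  have chiD: "real (chi n E k) = (\<Sum>j\<le>n. real (D j) * real (k choose j))" for k
  proof -
    have "chi n E k = (\<Sum>j\<le>k. (k choose j) * D j)"
      unfolding chi_eq D_def using decomp_canon[OF fS iq, of 0 k] by simp
    then have "real (chi n E k) = (\<Sum>j\<le>k. real (D j) * real (k choose j))"
      by (simp add: mult.commute)
    also have "\<dots> = (\<Sum>j\<le>n. real (D j) * real (k choose j))"
      using D0 by (intro sum_ext_nat) (auto simp: binomial_eq_0)
    finally show ?thesis .
  qed
  have chiG: "real (chi n E (m+2)) = (\<Sum>j\<le>n. real (G j) * real (m choose j))" for m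
  proof -
    have "chi n E (m+2) = (\<Sum>j\<le>m. (m choose j) * G j)"
      unfolding chi_eq G_def using decomp_canon[OF fS iq, of 2 m] by (simp add: add.commute)
    then have "real (chi n E (m+2)) = (\<Sum>j\<le>m. real (G j) * real (m choose j))"
      by (simp add: mult.commute)
    also have "\<dots> = (\<Sum>j\<le>n. real (G j) * real (m choose j))"
      using G0 by (intro sum_ext_nat) (auto simp: binomial_eq_0)
    finally show ?thesis .
  qed
  define R where "R = (\<Sum>j\<le>n. smult (real (D j)) (bp 0 j))"
  have polyR: "poly R x = (\<Sum>j\<le>n. real (D j) * (x gchoose j))" for x
    unfolding R_def by (simp add: poly_sum poly_bp)
  have degR: "degree R \<le> n"
    unfolding R_def
  proof (rule degree_sum_le)
    fix j assume "j \<in> {..n}"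
    then show "degree (smult (real (D j)) (bp 0 j)) \<le> n"
      by (meson atMost_iff degree_bp degree_smult_le order_trans)
  qed simp
  have Rchi: "poly R (real k) = real (chi n E k)" for k
    unfolding polyR chiD by (simp add: binomial_gbinomial[symmetric])
  have chrom: "chrom_poly n E = R"
    unfolding chrom_poly_def
  proof (rule the_equality)
    show "degree R \<le> n \<and> (\<forall>k. poly R (real k) = real (chi n E k))" using degR Rchi by blast
    fix p assume "degree p \<le> n \<and> (\<forall>k. poly p (real k) = real (chi n E k))"
    then show "p = R" using Rchi by (intro poly_eq_on_nat[where a=0]) simp
  qed
  define W where "W = (\<Sum>i\<le>n. smult (real (G i)) (bp (-1) i))"
  have polyW: "poly W x = (\<Sum>i\<le>n. real (G i) * ((x - 1) gchoose i))" for x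
    unfolding W_def by (simp add: poly_sum poly_bp)
  have qW: "pcompose R [:1,1:] = W"
  proof (rule poly_eq_on_nat[where a=1])
    fix m :: nat
    have "poly (pcompose R [:1,1:]) (real m + 1) = poly R (real (m+2))"
      by (simp add: poly_pcompose algebra_simps)
    also have "\<dots> = real (chi n E (m+2))" by (rule Rchi)
    also have "\<dots> = poly W (real m + 1)"
      unfolding chiG polyW by (simp add: binomial_gbinomial[symmetric])
    finally show "poly (pcompose R [:1,1:]) (real m + 1) = poly W (real m + 1)" .
  qed
  show ?thesis
    unfolding chrom qW fvec_def
  proof (rule the_equality)
    show "(\<forall>i>n. real (cntQ (proper E) ?S {1..2+i} {2+1..2+i}) = 0) \<and>
      (\<forall>x. poly W x = (\<Sum>i\<le>n. real (cntQ (proper E) ?S {1..2+i} {2+1..2+i}) * ((x - 1) gchoose i)))"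
      using G0 polyW unfolding G_def by simp
    fix f assume f: "(\<forall>i>n. f i = 0) \<and> (\<forall>x. poly W x = (\<Sum>i\<le>n. f i * ((x - 1) gchoose i)))"
    show "f = (\<lambda>i. real (cntQ (proper E) ?S {1..2+i} {2+1..2+i}))"
      unfolding G_def[symmetric]
    proof (rule tri_unique[where n=n])
      show "\<forall>i>n. f i = 0" using f by simp
      show "\<forall>i>n. real (G i) = 0" using G0 by simp
      show "\<forall>m::nat. (\<Sum>i\<le>n. f i * real (m choose i)) = (\<Sum>i\<le>n. real (G i) * real (m choose i))"
      proof
        fix m :: nat
        have "(\<Sum>i\<le>n. f i * real (m choose i)) = poly W (real m + 1)"
          using f by (simp add: binomial_gbinomial)
        also have "\<dots> = (\<Sum>i\<le>n. real (G i) * real (m choose i))"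
          unfolding polyW by (simp add: binomial_gbinomial)
        finally show "(\<Sum>i\<le>n. f i * real (m choose i)) = (\<Sum>i\<le>n. real (G i) * real (m choose i))" .
      qed
    qed
  qed
qed

lemma G_formula:
  assumes iq: "invQ Q {1..n}"
    and cnt: "\<And>k. card {c \<in> {1..n::nat} \<rightarrow>\<^sub>E {1..k}. Q c} = k ^ p"
  shows "real (cntQ Q {1..n} {1..2+i} {2+1..2+i}) = (\<Sum>c=0..i. (-1)^c * real (i choose c) * real (i - c + 2) ^ p)"
proof -
  have "real (cntQ Q {1..n} {1..2+i} {2+1..2+i}) = (\<Sum>c=0..i. (-1)^c * real (i choose c) * real ((2 + (i - c)) ^ p))"
  proof (rule binv)
    fix m
    have "(2 + m) ^ p = (\<Sum>k\<le>m. (m choose k) * cntQ Q {1..n} {1..2+k} {2+1..2+k})"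
      using decomp_canon[OF _ iq, of 2 m] cnt[of "2+m"] by simp
    then show "real ((2 + m) ^ p) = (\<Sum>k\<le>m. real (m choose k) * real (cntQ Q {1..n} {1..2+k} {2+1..2+k}))"
      by (metis (no_types, lifting) of_nat_mult of_nat_sum sum.cong)
  qed
  also have "\<dots> = (\<Sum>c=0..i. (-1)^c * real (i choose c) * real (i - c + 2) ^ p)"
    by (rule sum.cong) (auto simp: add.commute)
  finally show ?thesis .
qed

lemma cnt_finite: "finite {c \<in> {1..n::nat} \<rightarrow>\<^sub>E {1..k::nat}. P c}"
  by (rule finite_subset[OF _ finite_PiE[of "{1..n}" "\<lambda>_. {1..k}"]]) auto

lemma upper_cnt: "cntQ (proper E) {1..n} Y Z \<le> cntQ (\<lambda>_. True) {1..n} Y (Z::nat set)"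
  if "Y = {1..k}" for k
  unfolding cntQ_def that by (rule card_mono[OF cnt_finite]) auto

lemma lower_cnt:
  assumes fE: "finite E"
  shows "cntQ (\<lambda>_. True) {1..n} {1..k} Z \<le> cntQ (proper E) {1..n} {1..k} Z + (\<Sum>e\<in>E. cntQ (mono_e e) {1..n} {1..k} Z)"
proof -
  let ?A = "{c \<in> {1..n} \<rightarrow>\<^sub>E {1..k}. True \<and> Z \<subseteq> c ` {1..n}}"
  let ?P = "{c \<in> {1..n} \<rightarrow>\<^sub>E {1..k}. proper E c \<and> Z \<subseteq> c ` {1..n}}"
  let ?M = "\<lambda>e. {c \<in> {1..n} \<rightarrow>\<^sub>E {1..k}. mono_e e c \<and> Z \<subseteq> c ` {1..n}}"
  have "?A \<subseteq> ?P \<union> (\<Union>e\<in>E. ?M e)" unfolding proper_def by auto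
  then have "card ?A \<le> card (?P \<union> (\<Union>e\<in>E. ?M e))"
    by (rule card_mono[rotated]) (intro finite_UnI finite_UN_I fE cnt_finite)+
  also have "\<dots> \<le> card ?P + card (\<Union>e\<in>E. ?M e)" by (rule card_Un_le)
  also have "card (\<Union>e\<in>E. ?M e) \<le> (\<Sum>e\<in>E. card (?M e))" by (rule card_UN_le[OF fE])
  finally show ?thesis unfolding cntQ_def by simp
qed

lemma sum_lin:
  fixes x a b :: "nat \<Rightarrow> real"
  shows "(\<Sum>c\<in>A. x c * (a c - K * b c)) = (\<Sum>c\<in>A. x c * a c) - K * (\<Sum>c\<in>A. x c * b c)"
  by (simp add: sum_subtractf sum_distrib_left right_diff_distrib mult.left_commute)

lemma upper_main:
  assumes "hypergraph n E" and "i \<le> n"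
  shows "fvec n (pcompose (chrom_poly n E) [:1, 1:]) i
             \<le> (\<Sum>c=0..i. (-1)^c * real (i choose c) * real (i - c + 2) ^ n)"
proof -
  have eS: "\<forall>e\<in>E. e \<subseteq> {1..n}" using assms(1) unfolding hypergraph_def by blast
  have "fvec n (pcompose (chrom_poly n E) [:1, 1:]) i = real (cntQ (proper E) {1..n} {1..2+i} {2+1..2+i})"
    using fvec_eq[OF eS] by simp
  also have "\<dots> \<le> real (cntQ (\<lambda>_. True) {1..n} {1..2+i} {2+1..2+i})"
    using upper_cnt by simp
  also have "\<dots> = (\<Sum>c=0..i. (-1)^c * real (i choose c) * real (i - c + 2) ^ n)"
    by (rule G_formula[OF inv_true count_true])
  finally show ?thesis .
qed

lemma lower_main:
  assumes "hypergraph n E" and "uniform r E" and "r \<ge> 2"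
  shows "(\<Sum>c=0..i. (-1)^c * real (i choose c) *
               (real (i - c + 2) ^ n - real (card E) * real (i - c + 2) ^ (n - r + 1)))
             \<le> fvec n (pcompose (chrom_poly n E) [:1, 1:]) i"
proof -
  have eS: "\<forall>e\<in>E. e \<subseteq> {1..n}" using assms(1) unfolding hypergraph_def by blast
  have ce: "\<forall>e\<in>E. card e = r" using assms(2) unfolding uniform_def by blast
  have fE: "finite E"
    by (rule finite_subset[of E "Pow {1..n}"]) (use eS in auto)
  define FT where "FT = (\<Sum>c=0..i. (-1)^c * real (i choose c) * real (i - c + 2) ^ n)"
  define FM where "FM = (\<Sum>c=0..i. (-1)^c * real (i choose c) * real (i - c + 2) ^ (n - r + 1))"
  have GT: "real (cntQ (\<lambda>_. True) {1..n} {1..2+i} {2+1..2+i}) = FT"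
    unfolding FT_def by (rule G_formula[OF inv_true count_true])
  have GM: "real (cntQ (mono_e e) {1..n} {1..2+i} {2+1..2+i}) = FM" if "e \<in> E" for e
    unfolding FM_def
    by (rule G_formula[OF inv_mono count_mono]) (use that eS ce assms(3) in auto)
  have "real (cntQ (\<lambda>_. True) {1..n} {1..2+i} {2+1..2+i})
      \<le> real (cntQ (proper E) {1..n} {1..2+i} {2+1..2+i}) + (\<Sum>e\<in>E. real (cntQ (mono_e e) {1..n} {1..2+i} {2+1..2+i}))"
  proof -
    have "real (cntQ (\<lambda>_. True) {1..n} {1..2+i} {2+1..2+i})
      \<le> real (cntQ (proper E) {1..n} {1..2+i} {2+1..2+i} + (\<Sum>e\<in>E. cntQ (mono_e e) {1..n} {1..2+i} {2+1..2+i}))"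
      using lower_cnt[OF fE, of n "2+i" "{2+1..2+i}"] by (simp only: of_nat_le_iff)
    then show ?thesis by (simp only: of_nat_add of_nat_sum)
  qed
  also have "(\<Sum>e\<in>E. real (cntQ (mono_e e) {1..n} {1..2+i} {2+1..2+i})) = real (card E) * FM"
    using GM by simp
  finally have low: "FT - real (card E) * FM \<le> real (cntQ (proper E) {1..n} {1..2+i} {2+1..2+i})"
    using GT by simp
  have "(\<Sum>c=0..i. (-1)^c * real (i choose c) *
               (real (i - c + 2) ^ n - real (card E) * real (i - c + 2) ^ (n - r + 1))) = FT - real (card E) * FM"
    unfolding FT_def FM_def by (rule sum_lin)
  also have "\<dots> \<le> fvec n (pcompose (chrom_poly n E) [:1, 1:]) i"
    using low fvec_eq[OF eS] by simp
  finally show ?thesis .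
qed

theorem mainTheorem9:
  fixes n r :: nat and E :: "nat set set"
  assumes "n > 0" and "hypergraph n E" and "uniform r E" and "r \<ge> 2"
  shows "(\<forall>i\<le>n.
           (\<Sum>c=0..i. (-1)^c * real (i choose c) *
               (real (i - c + 2) ^ n - real (card E) * real (i - c + 2) ^ (n - r + 1)))
             \<le> fvec n (pcompose (chrom_poly n E) [:1, 1:]) i
         \<and> fvec n (pcompose (chrom_poly n E) [:1, 1:]) i
             \<le> (\<Sum>c=0..i. (-1)^c * real (i choose c) * real (i - c + 2) ^ n))
         \<and> (\<forall>E'. hypergraph n E' \<longrightarrow> (\<forall>i\<le>n.
           fvec n (pcompose (chrom_poly n E') [:1, 1:]) i
             \<le> (\<Sum>c=0..i. (-1)^c * real (i choose c) * real (i - c + 2) ^ n)))"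
  using lower_main[OF assms(2-4)] upper_main[OF assms(2)] upper_main by blast

end
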